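(* Let $\mathcal A$ be finite, $r:\mathcal A\to[0,1]$, $\eta>0$, and $\pi^{\mathrm{ref}}\in\Delta(\mathcal A)$ with $\pi^{\mathrm{ref}}(a)>0$ for all $a$. Let $\hat\pi\in\Delta(\mathcal A)$ be any distribution with $\mathrm{supp}(\hat\pi)=\mathcal A$. Then $$\mathrm{SubOpt}(\hat\pi)=\eta^{-1}\,\mathbb E_{a\sim\pi^{\mathrm{ref}}}\Big[\psi\Big(\frac{\hat\pi(a)}{\pi^*(a)}\Big)\Big],\qquad\text{where }\psi(x)=x-1-\log x.$$
   Context: $J(\pi)=\sum_ar(a)\pi(a)-\eta^{-1}\mathrm{KL}(\pi^{\mathrm{ref}}\|\pi)$ with $\mathrm{KL}(P\|Q)=\sum_aP(a)\log(P(a)/Q(a))$; $\pi^*$ is the unique maximizer of $J$ over $\Delta(\mathcal A)$; $\mathrm{SubOpt}(\pi)=J(\pi^* )-J(\pi)$. *)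

theory Defs
  imports "HOL-Analysis.Analysis"
begin

definition prob_simplex :: "'a set \<Rightarrow> ('a \<Rightarrow> real) set" where
  "prob_simplex A = {p. (\<forall>a\<in>A. 0 \<le> p a) \<and> (\<forall>a. a \<notin> A \<longrightarrow> p a = 0) \<and> sum p A = 1}"

definition KL :: "'a set \<Rightarrow> ('a \<Rightarrow> real) \<Rightarrow> ('a \<Rightarrow> real) \<Rightarrow> ereal" where
  "KL A P Q = (if \<exists>a\<in>A. P a > 0 \<and> Q a = 0 then \<infinity>
     else ereal (\<Sum>a\<in>A. if P a = 0 then 0 else P a * ln (P a / Q a)))"

definition Jobj :: "'a set \<Rightarrow> ('a \<Rightarrow> real) \<Rightarrow> real \<Rightarrow> ('a \<Rightarrow> real) \<Rightarrow> ('a \<Rightarrow> real) \<Rightarrow> ereal" where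
  "Jobj A r \<eta> piref p = ereal (\<Sum>a\<in>A. r a * p a) - ereal (1 / \<eta>) * KL A piref p"

definition pistar :: "'a set \<Rightarrow> ('a \<Rightarrow> real) \<Rightarrow> real \<Rightarrow> ('a \<Rightarrow> real) \<Rightarrow> ('a \<Rightarrow> real)" where
  "pistar A r \<eta> piref = (THE p. p \<in> prob_simplex A \<and> (\<forall>q\<in>prob_simplex A. Jobj A r \<eta> piref q \<le> Jobj A r \<eta> piref p))"

definition SubOpt :: "'a set \<Rightarrow> ('a \<Rightarrow> real) \<Rightarrow> real \<Rightarrow> ('a \<Rightarrow> real) \<Rightarrow> ('a \<Rightarrow> real) \<Rightarrow> ereal" where
  "SubOpt A r \<eta> piref p = Jobj A r \<eta> piref (pistar A r \<eta> piref) - Jobj A r \<eta> piref p"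

definition psi :: "real \<Rightarrow> real" where
  "psi x = x - 1 - ln x"

end

theory Submission
  imports Defs
begin

lemma exists_lambda:
  fixes A :: "'a set" and r piref :: "'a \<Rightarrow> real" and \<eta> :: real
  assumes fin: "finite A" and eta: "\<eta> > 0"
    and ps: "sum piref A = 1" and pos: "\<forall>a\<in>A. piref a > 0"
  shows "\<exists>l. (\<forall>a\<in>A. r a < l) \<and> (\<Sum>a\<in>A. piref a / (\<eta> * (l - r a))) = 1"
proof -
  have ne: "A \<noteq> {}" using ps by auto
  define M where "M = Max (r ` A)"
  obtain a0 where a0: "a0 \<in> A" "r a0 = M"
  proof -
    have "M \<in> r ` A" unfolding M_def using fin ne by (intro Max_in) auto
    then show ?thesis using that by auto
  qed
  have rM: "\<forall>a\<in>A. r a \<le> M" unfolding M_def using fin by auto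
  have le1: "\<forall>a\<in>A. piref a \<le> 1"
  proof
    fix a assume a: "a \<in> A"
    have "piref a = sum piref {a}" by simp
    also have "\<dots> \<le> sum piref A"
      by (rule sum_mono2[OF fin]) (use a pos in auto)
    finally show "piref a \<le> 1" using ps by simp
  qed
  define g where "g l = (\<Sum>a\<in>A. piref a / (\<eta> * (l - r a)))" for l
  define l1 where "l1 = M + piref a0 / \<eta>"
  define l2 where "l2 = M + 1 / \<eta>"
  have p0: "piref a0 > 0" using pos a0 by auto
  have l1M: "l1 > M" unfolding l1_def using p0 eta by simp
  have l12: "l1 \<le> l2" unfolding l1_def l2_def using le1 a0 eta
    by (simp add: divide_right_mono)
  have g1: "g l1 \<ge> 1"
  proof -
    have "g l1 = sum (\<lambda>a. piref a / (\<eta> * (l1 - r a))) A" by (simp add: g_def)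
    also have "\<dots> \<ge> sum (\<lambda>a. piref a / (\<eta> * (l1 - r a))) {a0}"
      apply (rule sum_mono2[OF fin])
      using a0 pos rM l1M eta by (auto intro!: divide_nonneg_pos less_imp_le)
    finally show ?thesis using a0 p0 eta by (simp add: l1_def)
  qed
  have g2: "g l2 \<le> 1"
  proof -
    have "g l2 \<le> (\<Sum>a\<in>A. piref a / (\<eta> * (l2 - M)))"
      unfolding g_def
    proof (rule sum_mono)
      fix a assume a: "a \<in> A"
      have "\<eta> * (l2 - M) \<le> \<eta> * (l2 - r a)" using rM a eta by simp
      moreover have "0 < \<eta> * (l2 - M)" using eta by (simp add: l2_def)
      ultimately show "piref a / (\<eta> * (l2 - r a)) \<le> piref a / (\<eta> * (l2 - M))"
        using pos a by (intro divide_left_mono) auto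
    qed
    also have "\<dots> = 1" using ps eta by (simp add: l2_def sum_divide_distrib[symmetric])
    finally show ?thesis .
  qed
  have "\<exists>x. l1 \<le> x \<and> x \<le> l2 \<and> g x = 1"
  proof (rule IVT2[OF g2 g1 l12], intro allI impI)
    fix x assume x: "l1 \<le> x \<and> x \<le> l2"
    have "\<forall>a\<in>A. \<eta> * (x - r a) \<noteq> 0" using x l1M rM eta by force
    then show "isCont g x" unfolding g_def
      by (intro continuous_intros) auto
  qed
  then obtain l where l: "l1 \<le> l" "g l = 1" by auto
  show ?thesis
    by (rule exI[of _ l]) (use l l1M rM g_def in force)
qed


lemma psi_nonneg: "x > 0 \<Longrightarrow> psi x \<ge> 0"
  unfolding psi_def using ln_le_minus_one[of x] by simp

lemma psi_zero: "x > 0 \<Longrightarrow> psi x = 0 \<Longrightarrow> x = 1"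
  unfolding psi_def using ln_eq_minus_one[of x] by simp

theorem lemmaE1:
  fixes A :: "'a set" and r piref pihat :: "'a \<Rightarrow> real" and \<eta> :: real
  assumes "finite A"
    and "\<forall>a\<in>A. 0 \<le> r a \<and> r a \<le> 1"
    and "\<eta> > 0"
    and "piref \<in> prob_simplex A" and "\<forall>a\<in>A. piref a > 0"
    and "pihat \<in> prob_simplex A" and "\<forall>a\<in>A. pihat a > 0"
  shows "SubOpt A r \<eta> piref pihat =
    ereal ((1 / \<eta>) * (\<Sum>a\<in>A. piref a * psi (pihat a / pistar A r \<eta> piref a)))"
proof -
  note fin = assms(1) and eta = assms(3) and rpos = assms(5)
  have rs: "sum piref A = 1" using assms(4) by (simp add: prob_simplex_def)
  obtain l where l: "\<forall>a\<in>A. r a < l" "(\<Sum>a\<in>A. piref a / (\<eta> * (l - r a))) = 1"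
    using exists_lambda[OF fin eta rs rpos] by blast
  define q where "q a = (if a \<in> A then piref a / (\<eta> * (l - r a)) else 0)" for a
  have qpos: "\<forall>a\<in>A. q a > 0" using l(1) rpos eta by (simp add: q_def)
  have qsum: "sum q A = 1" using l(2) by (simp add: q_def)
  have qs: "q \<in> prob_simplex A" using qpos qsum by (auto simp: prob_simplex_def q_def)
  have r_eq: "r a = l - piref a / (\<eta> * q a)" if a: "a \<in> A" for a
  proof -
    have "piref a > 0" "l - r a > 0" using a l(1) rpos by auto
    then show ?thesis using a eta by (simp add: q_def)
  qed
  define F where "F p = (\<Sum>a\<in>A. r a * p a) - (1/\<eta>) * (\<Sum>a\<in>A. piref a * ln (piref a / p a))" for p
  have Jpos: "Jobj A r \<eta> piref p = ereal (F p)" if p: "\<forall>a\<in>A. p a > 0" for p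
  proof -
    have "KL A piref p = ereal (\<Sum>a\<in>A. piref a * ln (piref a / p a))"
      unfolding KL_def using p rpos by (auto intro!: sum.cong)
    then show ?thesis by (simp add: Jobj_def F_def)
  qed
  have Jzero: "Jobj A r \<eta> piref p = - \<infinity>" if p: "a \<in> A" "p a = 0" for p a
  proof -
    have "KL A piref p = \<infinity>" unfolding KL_def using p rpos by auto
    then show ?thesis using eta by (simp add: Jobj_def)
  qed
  have ident: "F q - F p = (1/\<eta>) * (\<Sum>a\<in>A. piref a * psi (p a / q a))"
    if p: "p \<in> prob_simplex A" "\<forall>a\<in>A. p a > 0" for p
  proof -
    have ps: "sum p A = 1" using p(1) by (simp add: prob_simplex_def)
    have tm: "r a * q a - (1/\<eta>) * (piref a * ln (piref a / q a))
       - (r a * p a - (1/\<eta>) * (piref a * ln (piref a / p a)))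
       = (1/\<eta>) * (piref a * psi (p a / q a)) + l * (q a - p a)" if a: "a \<in> A" for a
    proof -
      have q0: "q a > 0" "p a > 0" "piref a > 0" using a qpos p(2) rpos by auto
      have L: "ln (piref a / q a) = ln (piref a) - ln (q a)"
           "ln (piref a / p a) = ln (piref a) - ln (p a)"
           "ln (p a / q a) = ln (p a) - ln (q a)" using q0 by (simp_all add: ln_div)
      show ?thesis unfolding r_eq[OF a] psi_def L using q0 eta
        by (simp add: field_simps)
    qed
    have "F q - F p = (\<Sum>a\<in>A. r a * q a - (1/\<eta>) * (piref a * ln (piref a / q a))
       - (r a * p a - (1/\<eta>) * (piref a * ln (piref a / p a))))"
      by (simp add: F_def sum_subtractf sum_distrib_left)
    also have "\<dots> = (\<Sum>a\<in>A. (1/\<eta>) * (piref a * psi (p a / q a)) + l * (q a - p a))"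
      using tm by (rule sum.cong[OF refl])
    also have "\<dots> = (1/\<eta>) * (\<Sum>a\<in>A. piref a * psi (p a / q a))"
      using qsum ps by (simp add: sum.distrib sum_distrib_left[symmetric] sum_subtractf sum_divide_distrib[symmetric])
    finally show ?thesis .
  qed
  have psum_nn: "(\<Sum>a\<in>A. piref a * psi (p a / q a)) \<ge> 0" if "\<forall>a\<in>A. p a > 0" for p
    using that qpos rpos by (intro sum_nonneg mult_nonneg_nonneg psi_nonneg) auto
  have maxq: "Jobj A r \<eta> piref p \<le> Jobj A r \<eta> piref q" if p: "p \<in> prob_simplex A" for p
  proof (cases "\<forall>a\<in>A. p a > 0")
    case True
    have "(\<Sum>a\<in>A. piref a * psi (p a / q a)) / \<eta> \<ge> 0"
      using psum_nn[OF True] eta by simp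
    then have "F p \<le> F q" using ident[OF p True] by simp
    then show ?thesis using Jpos True qpos by simp
  next
    case False
    then obtain a where "a \<in> A" "p a = 0" using p by (force simp: prob_simplex_def)
    then show ?thesis using Jzero by simp
  qed
  have uniq: "p = q" if p: "p \<in> prob_simplex A"
    and pm: "\<forall>q'\<in>prob_simplex A. Jobj A r \<eta> piref q' \<le> Jobj A r \<eta> piref p" for p
  proof -
    have pp: "\<forall>a\<in>A. p a > 0"
    proof (rule ccontr)
      assume "\<not> (\<forall>a\<in>A. p a > 0)"
      then obtain a where "a \<in> A" "p a = 0" using p by (force simp: prob_simplex_def)
      then have "Jobj A r \<eta> piref p = - \<infinity>" using Jzero by simp
      moreover have "Jobj A r \<eta> piref q \<le> Jobj A r \<eta> piref p" using pm qs by blast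
      ultimately show False using Jpos qpos by simp
    qed
    have "F q \<le> F p" using pm qs Jpos pp qpos by fastforce
    then have "(\<Sum>a\<in>A. piref a * psi (p a / q a)) / \<eta> \<le> 0" using ident[OF p pp] by simp
    then have "(\<Sum>a\<in>A. piref a * psi (p a / q a)) \<le> 0" using eta
      by (simp add: divide_le_0_iff)
    then have z: "(\<Sum>a\<in>A. piref a * psi (p a / q a)) = 0" using psum_nn[OF pp] by simp
    have nn: "\<And>a. a \<in> A \<Longrightarrow> 0 \<le> piref a * psi (p a / q a)"
      using pp qpos rpos psi_nonneg by (simp add: less_imp_le)
    have "\<forall>a\<in>A. piref a * psi (p a / q a) = 0"
      using sum_nonneg_eq_0_iff[OF fin, of "\<lambda>a. piref a * psi (p a / q a)"] nn z by blast
    then have "\<forall>a\<in>A. p a = q a"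
    proof (intro ballI)
      fix a assume a: "a \<in> A" and h: "\<forall>a\<in>A. piref a * psi (p a / q a) = 0"
      have pa: "p a > 0" "q a > 0" "piref a > 0" using a pp qpos rpos by auto
      have "piref a * psi (p a / q a) = 0" using h a by blast
      then have "psi (p a / q a) = 0" using pa by simp
      then have "p a / q a = 1" using psi_zero[of "p a / q a"] pa by simp
      then show "p a = q a" using pa by simp
    qed
    moreover have "\<forall>a. a \<notin> A \<longrightarrow> p a = q a" using p by (simp add: prob_simplex_def q_def)
    ultimately show ?thesis by blast
  qed
  have pistar_eq: "pistar A r \<eta> piref = q"
    unfolding pistar_def
  proof (rule the_equality)
    show "q \<in> prob_simplex A \<and> (\<forall>q'\<in>prob_simplex A. Jobj A r \<eta> piref q' \<le> Jobj A r \<eta> piref q)"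
      using qs maxq by blast
  next
    fix p assume "p \<in> prob_simplex A \<and> (\<forall>q'\<in>prob_simplex A. Jobj A r \<eta> piref q' \<le> Jobj A r \<eta> piref p)"
    then show "p = q" using uniq by blast
  qed
  have ph: "pihat \<in> prob_simplex A" "\<forall>a\<in>A. pihat a > 0" using assms(6,7) by auto
  have "SubOpt A r \<eta> piref pihat = ereal (F q) - ereal (F pihat)"
    unfolding SubOpt_def pistar_eq Jpos[OF qpos] Jpos[OF ph(2)] by (rule refl)
  also have "\<dots> = ereal (F q - F pihat)" by simp
  also have "\<dots> = ereal ((1 / \<eta>) * (\<Sum>a\<in>A. piref a * psi (pihat a / q a)))"
    using ident[OF ph] by (rule arg_cong)
  finally show ?thesis unfolding pistar_eq .
qed

end
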